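(* Let $H\subseteq G$ be a Lie subgroup acting on $G$ by left translation, and suppose $\bar{\mathcal{L}}_d$ is $H$-invariant: $\bar{\mathcal{L}}_d(\triangle_a^j,hg,\xi,\eta)=\bar{\mathcal{L}}_d(\triangle_a^j,g,\xi,\eta)$ for all $h\in H$. Let $g_d$ satisfy the Lie group DCEL equations \[ \tfrac{1}{\Delta t}\big(\mu_a^j-\operatorname{Ad}^*_{\tau(\Delta t\xi_a^{j-1})}\mu_a^{j-1}\big)+\tfrac{1}{\Delta s}\big(\lambda_a^j-\operatorname{Ad}^*_{\tau(\Delta s\eta_{a-1}^j)}\lambda_{a-1}^j\big)=(g_a^j)^{-1}D_g\bar{\mathcal{L}}_a^j,\quad j=1,\dots,N-1,\ a=1,\dots,A-1. \] Then for all $0\le B<C\le A-1$, $0\le K<L\le N-1$, \begin{align*} 0=&\sum_{j=K+1}^{L}\big(\bar J^1(\triangle_B^j)+\bar J^2(\triangle_B^{j-1})+\bar J^3(\triangle_C^j)\big)+\sum_{a=B+1}^{C}\big(\bar J^1(\triangle_a^K)+\bar J^2(\triangle_a^L)+\bar J^3(\triangle_{a-1}^K)\big)\\ &+\bar J^1(\triangle_B^K)+\bar J^2(\triangle_B^L)+\bar J^3(\triangle_C^K)\quad\in\mathfrak{h}^*. \end{align*}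
   Context: Fix integers $N,A\ge 2$, nodes $(j,a)$, $0\le j\le N$, $0\le a\le A$, triangles $\triangle_a^j=((j,a),(j+1,a),(j,a+1))$ for $j\le N-1$, $a\le A-1$. $G$ is a Lie group with Lie algebra $\mathfrak{g}$; $g_d=(g_a^j)$, $g_a^j\in G$. For $\alpha\in T_g^*G$, $g^{-1}\alpha:=T_e^*L_g(\alpha)\in\mathfrak{g}^*$; $\operatorname{Ad}^*_h$ is the dual of $\operatorname{Ad}_h$. Fix a local diffeomorphism $\tau:\mathfrak{g}\to G$ near $0$ with $\tau(0)=e$, ${\rm d}^R\tau^{-1}_\xi(\eta):=T_{\tau(\xi)}\tau^{-1}(\eta\,\tau(\xi))$; $\Delta t,\Delta s>0$; $\xi_a^j=\tau^{-1}((g_a^j)^{-1}g_a^{j+1})/\Delta t$, $\eta_a^j=\tau^{-1}((g_a^j)^{-1}g_{a+1}^j)/\Delta s$. The discrete trivialized Lagrangian is smooth $\bar{\mathcal{L}}_d(\triangle_a^j,\cdot,\cdot,\cdot):G\times\mathfrak{g}\times\mathfrak{g}\to\mathbb{R}$; $\bar{\mathcal{L}}_a^j$ its value at $(g_a^j,\xi_a^j,\eta_a^j)$; $D_g,D_\xi,D_\eta$ partial derivatives; $\mu_a^j=({\rm d}^R\tau^{-1}_{\Delta t\xi_a^j})^*D_\xi\bar{\mathcal{L}}_a^j$, $\lambda_a^j=({\rm d}^R\tau^{-1}_{\Delta s\eta_a^j})^*D_\eta\bar{\mathcal{L}}_a^j$. With $i^*:\mathfrak{g}^*\to\mathfrak{h}^*$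 the dual of the inclusion $\mathfrak{h}\hookrightarrow\mathfrak{g}$, the trivialized discrete momentum maps are $\bar J^1(\triangle_a^j)=i^*\operatorname{Ad}^*_{(g_a^j)^{-1}}\big((g_a^j)^{-1}D_g\bar{\mathcal{L}}_a^j-\tfrac{1}{\Delta t}\mu_a^j-\tfrac{1}{\Delta s}\lambda_a^j\big)$, $\bar J^2(\triangle_a^j)=i^*\tfrac{1}{\Delta t}\operatorname{Ad}^*_{(g_a^j)^{-1}}\mu_a^j$, $\bar J^3(\triangle_a^j)=i^*\tfrac{1}{\Delta s}\operatorname{Ad}^*_{(g_a^j)^{-1}}\lambda_a^j$. *)

theory Defs
  imports "HOL-Analysis.Analysis"
begin

text \<open>Abstract Lie group data: a group (gmul, ge, ginv) on the type 'g, its Lie algebra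
  modelled as a finite-dimensional real vector space 'v, the exponential map and the
  adjoint representation, linked by the standard identities.\<close>

definition lie_group_str ::
  "('g \<Rightarrow> 'g \<Rightarrow> 'g) \<Rightarrow> 'g \<Rightarrow> ('g \<Rightarrow> 'g) \<Rightarrow> ('v::real_vector \<Rightarrow> 'g) \<Rightarrow> ('g \<Rightarrow> 'v \<Rightarrow> 'v) \<Rightarrow> bool"
where
  "lie_group_str gmul ge ginv gexp Ad \<longleftrightarrow>
     Groups.group gmul ge ginv \<and>
     gexp 0 = ge \<and>
     (\<forall>s t \<zeta>. gexp ((s + t) *\<^sub>R \<zeta>) = gmul (gexp (s *\<^sub>R \<zeta>)) (gexp (t *\<^sub>R \<zeta>))) \<and>
     (\<forall>x. linear (Ad x)) \<and>
     Ad ge = id \<and>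
     (\<forall>x y. Ad (gmul x y) = Ad x \<circ> Ad y) \<and>
     (\<forall>x \<zeta>. gmul (gmul x (gexp \<zeta>)) (ginv x) = gexp (Ad x \<zeta>))"

definition is_subgroup :: "('g \<Rightarrow> 'g \<Rightarrow> 'g) \<Rightarrow> 'g \<Rightarrow> ('g \<Rightarrow> 'g) \<Rightarrow> 'g set \<Rightarrow> bool" where
  "is_subgroup gmul ge ginv H \<longleftrightarrow>
     ge \<in> H \<and> (\<forall>x\<in>H. \<forall>y\<in>H. gmul x y \<in> H) \<and> (\<forall>x\<in>H. ginv x \<in> H)"

definition lie_subalg :: "('v::real_vector \<Rightarrow> 'g) \<Rightarrow> 'g set \<Rightarrow> 'v set" where
  "lie_subalg gexp H = {\<zeta>. \<forall>t::real. gexp (t *\<^sub>R \<zeta>) \<in> H}"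

definition adstar :: "('g \<Rightarrow> 'v \<Rightarrow> 'v) \<Rightarrow> 'g \<Rightarrow> ('v \<Rightarrow> real) \<Rightarrow> ('v \<Rightarrow> real)" where
  "adstar Ad h \<mu> = (\<lambda>\<zeta>. \<mu> (Ad h \<zeta>))"

text \<open>Left-trivialised derivative g^{-1} D_g f of f : G -> R at g:
  phi(zeta) = d/dt f(g gexp(t zeta)) at t = 0, phi linear.\<close>
definition has_ltriv_deriv ::
  "('g \<Rightarrow> 'g \<Rightarrow> 'g) \<Rightarrow> ('v::real_vector \<Rightarrow> 'g) \<Rightarrow> ('g \<Rightarrow> real) \<Rightarrow> 'g \<Rightarrow> ('v \<Rightarrow> real) \<Rightarrow> bool"
where
  "has_ltriv_deriv gmul gexp f x \<phi> \<longleftrightarrow>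
     linear \<phi> \<and> (\<forall>\<zeta>. ((\<lambda>t. f (gmul x (gexp (t *\<^sub>R \<zeta>)))) has_real_derivative \<phi> \<zeta>) (at 0))"

end

theory Submission
  imports Defs
begin

lemma tel_aux: "K \<le> L \<Longrightarrow> (\<Sum>j=Suc K..L. f (j-1) - f j) = f K - (f L::real)"
proof (induction L)
  case 0 then show ?case by simp
next
  case (Suc L)
  show ?case
  proof (cases "K = Suc L")
    case True then show ?thesis by simp
  next
    case False
    then have "K \<le> L" using Suc.prems by simp
    then show ?thesis using Suc.IH by (simp add: sum.cl_ivl_Suc)
  qed
qed

lemma grid_sum:
  fixes P Q :: "nat \<Rightarrow> nat \<Rightarrow> real"
  assumes cons: "\<And>j a. K < j \<Longrightarrow> j \<le> L \<Longrightarrow> B < a \<Longrightarrow> a \<le> C \<Longrightarrow>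
                    P j a - P (j-1) a + Q j a - Q j (a-1) = 0"
    and BC: "B < C" and KL: "K < L"
  shows "(\<Sum>j=K+1..L. (- P j B - Q j B) + P (j-1) B + Q j C)
       + (\<Sum>a=B+1..C. (- P K a - Q K a) + P L a + Q K (a-1))
       + (- P K B - Q K B) + P L B + Q K C = 0"
proof -
  have t1: "(\<Sum>j=K+1..L. P (j-1) B - P j B) = P K B - P L B"
    using tel_aux[of K L "\<lambda>j. P j B"] KL by simp
  have t2: "(\<Sum>a=B+1..C. Q K (a-1) - Q K a) = Q K B - Q K C"
    using tel_aux[of B C "\<lambda>a. Q K a"] BC by simp
  have t3: "(\<Sum>a=B+1..C. P L a - P K a) = (\<Sum>a=B+1..C. \<Sum>j=K+1..L. P j a - P (j-1) a)"
  proof (rule sum.cong[OF refl])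
    fix a
    have "(\<Sum>j=K+1..L. P (j-1) a - P j a) = P K a - P L a"
      using tel_aux[of K L "\<lambda>j. P j a"] KL by simp
    then show "P L a - P K a = (\<Sum>j=K+1..L. P j a - P (j-1) a)" by (simp add: sum_subtractf)
  qed
  have t4: "(\<Sum>j=K+1..L. Q j C - Q j B) = (\<Sum>j=K+1..L. \<Sum>a=B+1..C. Q j a - Q j (a-1))"
  proof (rule sum.cong[OF refl])
    fix j
    have "(\<Sum>a=B+1..C. Q j (a-1) - Q j a) = Q j B - Q j C"
      using tel_aux[of B C "\<lambda>a. Q j a"] BC by simp
    then show "Q j C - Q j B = (\<Sum>a=B+1..C. Q j a - Q j (a-1))" by (simp add: sum_subtractf)
  qed
  have t5: "(\<Sum>a=B+1..C. \<Sum>j=K+1..L. P j a - P (j-1) a) + (\<Sum>j=K+1..L. \<Sum>a=B+1..C. Q j a - Q j (a-1)) = 0"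
  proof -
    have "(\<Sum>a=B+1..C. \<Sum>j=K+1..L. P j a - P (j-1) a) = (\<Sum>j=K+1..L. \<Sum>a=B+1..C. P j a - P (j-1) a)"
      by (rule sum.swap)
    moreover have "(\<Sum>j=K+1..L. \<Sum>a=B+1..C. P j a - P (j-1) a) + (\<Sum>j=K+1..L. \<Sum>a=B+1..C. Q j a - Q j (a-1))
        = (\<Sum>j=K+1..L. \<Sum>a=B+1..C. P j a - P (j-1) a + Q j a - Q j (a-1))"
      by (simp add: sum.distrib[symmetric] algebra_simps)
    moreover have "\<dots> = 0"
    proof (intro sum.neutral ballI)
      fix j a assume "j \<in> {K+1..L}" "a \<in> {B+1..C}"
      then show "P j a - P (j-1) a + Q j a - Q j (a-1) = 0" by (intro cons) auto
    qed
    ultimately show ?thesis by simp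
  qed
  have e1: "(\<Sum>j=K+1..L. (- P j B - Q j B) + P (j-1) B + Q j C)
      = (\<Sum>j=K+1..L. P (j-1) B - P j B) + (\<Sum>j=K+1..L. Q j C - Q j B)"
    by (simp add: sum.distrib[symmetric] algebra_simps)
  have e2: "(\<Sum>a=B+1..C. (- P K a - Q K a) + P L a + Q K (a-1))
      = (\<Sum>a=B+1..C. P L a - P K a) + (\<Sum>a=B+1..C. Q K (a-1) - Q K a)"
    by (simp add: sum.distrib[symmetric] algebra_simps)
  show ?thesis unfolding e1 e2 t1 t2 t3 t4 using t5 by linarith
qed

theorem mainTheorem13:
  fixes gmul :: "'g \<Rightarrow> 'g \<Rightarrow> 'g" and ge :: 'g and ginv :: "'g \<Rightarrow> 'g"
    and gexp :: "'v::euclidean_space \<Rightarrow> 'g" and Ad :: "'g \<Rightarrow> 'v \<Rightarrow> 'v"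
    and H :: "'g set"
    and tau :: "'v \<Rightarrow> 'g" and tauinv :: "'g \<Rightarrow> 'v" and U :: "'v set"
    and dRtauinv :: "'v \<Rightarrow> 'v \<Rightarrow> 'v"
    and N A :: nat and dt ds :: real
    and Ld :: "nat \<Rightarrow> nat \<Rightarrow> 'g \<Rightarrow> 'v \<Rightarrow> 'v \<Rightarrow> real"
    and DgL DxiL DetaL :: "nat \<Rightarrow> nat \<Rightarrow> 'g \<Rightarrow> 'v \<Rightarrow> 'v \<Rightarrow> 'v \<Rightarrow> real"
    and g :: "nat \<Rightarrow> nat \<Rightarrow> 'g"
    and xi eta :: "nat \<Rightarrow> nat \<Rightarrow> 'v"
    and mu lam J1 J2 J3 :: "nat \<Rightarrow> nat \<Rightarrow> 'v \<Rightarrow> real"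
    and B C K L :: nat
  assumes LG: "lie_group_str gmul ge ginv gexp Ad"
    and HG: "is_subgroup gmul ge ginv H"
    and NA: "N \<ge> 2" "A \<ge> 2"
    and steps: "dt > 0" "ds > 0"
    and tau: "tau 0 = ge" "open U" "0 \<in> U" "\<forall>\<xi>\<in>U. tauinv (tau \<xi>) = \<xi>"
    and dtau: "\<forall>\<xi>\<in>U. linear (dRtauinv \<xi>) \<and> (\<forall>\<eta>.
                 ((\<lambda>t. tauinv (gmul (gexp (t *\<^sub>R \<eta>)) (tau \<xi>))) has_vector_derivative dRtauinv \<xi> \<eta>) (at 0))"
    and Dg: "\<forall>j<N. \<forall>a<A. \<forall>x \<xi> \<eta>. has_ltriv_deriv gmul gexp (\<lambda>y. Ld j a y \<xi> \<eta>) x (DgL j a x \<xi> \<eta>)"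
    and Dxi: "\<forall>j<N. \<forall>a<A. \<forall>x \<xi> \<eta>. ((\<lambda>\<zeta>. Ld j a x \<zeta> \<eta>) has_derivative DxiL j a x \<xi> \<eta>) (at \<xi>)"
    and Deta: "\<forall>j<N. \<forall>a<A. \<forall>x \<xi> \<eta>. ((\<lambda>\<zeta>. Ld j a x \<xi> \<zeta>) has_derivative DetaL j a x \<xi> \<eta>) (at \<eta>)"
    and Hinv: "\<forall>j<N. \<forall>a<A. \<forall>h\<in>H. \<forall>x \<xi> \<eta>. Ld j a (gmul h x) \<xi> \<eta> = Ld j a x \<xi> \<eta>"
    and dom: "\<forall>j<N. \<forall>a\<le>A. gmul (ginv (g j a)) (g (Suc j) a) \<in> tau ` U"
             "\<forall>j\<le>N. \<forall>a<A. gmul (ginv (g j a)) (g j (Suc a)) \<in> tau ` U"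
    and xi_def: "\<forall>j a. xi j a = (1 / dt) *\<^sub>R tauinv (gmul (ginv (g j a)) (g (Suc j) a))"
    and eta_def: "\<forall>j a. eta j a = (1 / ds) *\<^sub>R tauinv (gmul (ginv (g j a)) (g j (Suc a)))"
    and mu_def: "\<forall>j a. mu j a = (\<lambda>\<zeta>. DxiL j a (g j a) (xi j a) (eta j a) (dRtauinv (dt *\<^sub>R xi j a) \<zeta>))"
    and lam_def: "\<forall>j a. lam j a = (\<lambda>\<zeta>. DetaL j a (g j a) (xi j a) (eta j a) (dRtauinv (ds *\<^sub>R eta j a) \<zeta>))"
    and J1_def: "\<forall>j a. J1 j a = adstar Ad (ginv (g j a))
                   (\<lambda>\<zeta>. DgL j a (g j a) (xi j a) (eta j a) \<zeta> - mu j a \<zeta> / dt - lam j a \<zeta> / ds)"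
    and J2_def: "\<forall>j a. J2 j a = (\<lambda>\<zeta>. adstar Ad (ginv (g j a)) (mu j a) \<zeta> / dt)"
    and J3_def: "\<forall>j a. J3 j a = (\<lambda>\<zeta>. adstar Ad (ginv (g j a)) (lam j a) \<zeta> / ds)"
    and DCEL: "\<forall>j\<in>{1..N-1}. \<forall>a\<in>{1..A-1}. \<forall>\<zeta>.
                 (mu j a \<zeta> - adstar Ad (tau (dt *\<^sub>R xi (j-1) a)) (mu (j-1) a) \<zeta>) / dt
               + (lam j a \<zeta> - adstar Ad (tau (ds *\<^sub>R eta j (a-1))) (lam j (a-1)) \<zeta>) / ds
               = DgL j a (g j a) (xi j a) (eta j a) \<zeta>"
    and idx: "B < C" "C \<le> A - 1" "K < L" "L \<le> N - 1"
  shows "\<forall>\<zeta>\<in>lie_subalg gexp H.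
           (\<Sum>j=K+1..L. J1 j B \<zeta> + J2 (j-1) B \<zeta> + J3 j C \<zeta>)
         + (\<Sum>a=B+1..C. J1 K a \<zeta> + J2 L a \<zeta> + J3 K (a-1) \<zeta>)
         + J1 K B \<zeta> + J2 L B \<zeta> + J3 K C \<zeta> = 0"
proof
  fix \<zeta> assume hz: "\<zeta> \<in> lie_subalg gexp H"
  have LG': "Groups.group gmul ge ginv" "\<forall>x. linear (Ad x)" "Ad ge = id"
     "\<forall>x y. Ad (gmul x y) = Ad x \<circ> Ad y"
     "\<forall>x \<zeta>. gmul (gmul x (gexp \<zeta>)) (ginv x) = gexp (Ad x \<zeta>)"
    using LG unfolding lie_group_str_def by auto
  interpret grp: group gmul ge ginv by (rule LG'(1))
  have AdAd: "Ad x (Ad y v) = Ad (gmul x y) v" for x y v using LG'(4) by simp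
  have Adinv: "Ad x (Ad (ginv x) v) = v" for x v
    using AdAd[of x "ginv x" v] LG'(3) by simp
  have Hmem: "gexp (t *\<^sub>R \<zeta>) \<in> H" for t using hz unfolding lie_subalg_def by auto
  have zero: "DgL j a x p q (Ad (ginv x) \<zeta>) = 0" if "j < N" "a < A" for j a x p q
  proof -
    let ?z = "Ad (ginv x) \<zeta>"
    have sw: "gmul x (gexp (t *\<^sub>R ?z)) = gmul (gexp (t *\<^sub>R \<zeta>)) x" for t
    proof -
      have lin: "t *\<^sub>R ?z = Ad (ginv x) (t *\<^sub>R \<zeta>)"
        using LG'(2) by (simp add: linear_scale)
      have "gmul (gmul x (gexp (t *\<^sub>R ?z))) (ginv x) = gexp (t *\<^sub>R \<zeta>)"
        using LG'(5) lin Adinv by metis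
      then have "gmul (gmul (gmul x (gexp (t *\<^sub>R ?z))) (ginv x)) x = gmul (gexp (t *\<^sub>R \<zeta>)) x"
        by simp
      then show ?thesis by (simp add: grp.assoc)
    qed
    have "(\<lambda>t. Ld j a (gmul x (gexp (t *\<^sub>R ?z))) p q) = (\<lambda>t. Ld j a x p q)"
      using sw Hinv that Hmem by auto
    moreover have "((\<lambda>t. Ld j a (gmul x (gexp (t *\<^sub>R ?z))) p q) has_real_derivative DgL j a x p q ?z) (at 0)"
      using Dg that unfolding has_ltriv_deriv_def by blast
    ultimately have "((\<lambda>t. Ld j a x p q) has_real_derivative DgL j a x p q ?z) (at 0)" by simp
    then show ?thesis using DERIV_const DERIV_unique by blast
  qed
  define P where "P j a = J2 j a \<zeta>" for j a
  define Q where "Q j a = J3 j a \<zeta>" for j a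
  have J1e: "J1 j a \<zeta> = - P j a - Q j a" if "j < N" "a < A" for j a
    using zero[OF that] unfolding P_def Q_def J1_def J2_def J3_def adstar_def
    by (simp add: J1_def J2_def J3_def adstar_def)
  have tauinv: "tau (c *\<^sub>R ((1/c) *\<^sub>R tauinv y)) = y" if "y \<in> tau ` U" "c > 0" for y c
    using that tau(4) by auto
  have cons: "P j a - P (j-1) a + Q j a - Q j (a-1) = 0"
    if "K < j" "j \<le> L" "B < a" "a \<le> C" for j a
  proof -
    have j: "j \<in> {1..N-1}" "j - 1 < N" "Suc (j-1) = j" using that idx by auto
    have a: "a \<in> {1..A-1}" "a - 1 \<le> A" "a - 1 < A" "Suc (a-1) = a" using that idx NA by auto
    have T1: "tau (dt *\<^sub>R xi (j-1) a) = gmul (ginv (g (j-1) a)) (g j a)"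
    proof -
      have "gmul (ginv (g (j-1) a)) (g (Suc (j-1)) a) \<in> tau ` U"
        using dom(1) j(2) a(1) by auto
      then show ?thesis
        using tauinv[of "gmul (ginv (g (j-1) a)) (g (Suc (j-1)) a)" dt] j(3) steps xi_def by simp
    qed
    have T2: "tau (ds *\<^sub>R eta j (a-1)) = gmul (ginv (g j (a-1))) (g j a)"
    proof -
      have "gmul (ginv (g j (a-1))) (g j (Suc (a-1))) \<in> tau ` U"
        using dom(2) j(2) a(3) by auto
      then show ?thesis
        using tauinv[of "gmul (ginv (g j (a-1))) (g j (Suc (a-1)))" ds] a(4) steps eta_def by simp
    qed
    have E: "(mu j a v - adstar Ad (tau (dt *\<^sub>R xi (j-1) a)) (mu (j-1) a) v) / dt
               + (lam j a v - adstar Ad (tau (ds *\<^sub>R eta j (a-1))) (lam j (a-1)) v) / ds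
               = DgL j a (g j a) (xi j a) (eta j a) v" for v
      using DCEL j(1) a(1) by blast
    have k1: "Ad (gmul (ginv p) q) (Ad (ginv q) \<zeta>) = Ad (ginv p) \<zeta>" for p q
      using AdAd Adinv by metis
    have "0 = DgL j a (g j a) (xi j a) (eta j a) (Ad (ginv (g j a)) \<zeta>)"
      using zero j a by simp
    also have "\<dots> = (P j a - P (j-1) a) + (Q j a - Q j (a-1))"
      unfolding E[symmetric] T1 T2 P_def Q_def J2_def J3_def adstar_def k1
      by (simp add: diff_divide_distrib J2_def J3_def adstar_def)
    finally show ?thesis by simp
  qed
  have idx2: "K \<le> N - 1" "L \<le> N - 1" "B \<le> A - 1" "C \<le> A - 1" using idx by auto
  have J1s: "J1 j B \<zeta> = - P j B - Q j B" "J1 K a \<zeta> = - P K a - Q K a" if "j \<le> L" "a \<le> C" for j a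
    using J1e idx NA that by auto
  have "(\<Sum>j=K+1..L. J1 j B \<zeta> + J2 (j-1) B \<zeta> + J3 j C \<zeta>)
      = (\<Sum>j=K+1..L. (- P j B - Q j B) + P (j-1) B + Q j C)"
    by (rule sum.cong[OF refl]) (metis J1s atLeastAtMost_iff idx(1,3) less_imp_le P_def Q_def)
  moreover have "(\<Sum>a=B+1..C. J1 K a \<zeta> + J2 L a \<zeta> + J3 K (a-1) \<zeta>)
      = (\<Sum>a=B+1..C. (- P K a - Q K a) + P L a + Q K (a-1))"
    by (rule sum.cong[OF refl]) (metis J1s atLeastAtMost_iff idx(1,3) less_imp_le P_def Q_def)
  moreover have "J1 K B \<zeta> = - P K B - Q K B" using J1s(2)[of L B] idx by simp
  ultimately show "(\<Sum>j=K+1..L. J1 j B \<zeta> + J2 (j-1) B \<zeta> + J3 j C \<zeta>)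
         + (\<Sum>a=B+1..C. J1 K a \<zeta> + J2 L a \<zeta> + J3 K (a-1) \<zeta>)
         + J1 K B \<zeta> + J2 L B \<zeta> + J3 K C \<zeta> = 0"
    using grid_sum[of K L B C P Q, OF cons] idx unfolding P_def Q_def by simp
qed

end
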